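(* Let $\lambda$ be a nonzero real number. For every integer $n\ge0$, \[ \sum_{k=0}^{n}(-1)^{k}\,2^{-k-1}\,k!\,S_{2,\lambda}(n,k)=\frac{1}{n+1}\Big(\beta_{n+1,\lambda}-2^{n+1}\beta_{n+1,\frac{\lambda}{2}}\Big). \]
   Context: For nonzero real $\lambda$: $(x)_{0,\lambda}=1$, $(x)_{n,\lambda}=x(x-\lambda)\cdots(x-(n-1)\lambda)$ for $n\ge1$, and $(x)_k=x(x-1)\cdots(x-k+1)$. The degenerate Stirling numbers of the second kind $S_{2,\lambda}(n,k)$ are defined by $(x)_{n,\lambda}=\sum_{k=0}^{n}S_{2,\lambda}(n,k)(x)_{k}$. The degenerate Bernoulli numbers $\beta_{n,\mu}$ (for nonzero real $\mu$) are defined by $\frac{t}{e_{\mu}(t)-1}=\sum_{n=0}^{\infty}\beta_{n,\mu}\frac{t^{n}}{n!}$ with $e_\mu(t)=(1+\mu t)^{1/\mu}$; here $\mu=\lambda$ or $\mu=\lambda/2$. *)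

theory Defs
  imports Complex_Main "HOL-Computational_Algebra.Formal_Power_Series"
begin

definition dfall :: "real \<Rightarrow> nat \<Rightarrow> real \<Rightarrow> real" where
  "dfall lam n x = (\<Prod>i<n. x - real i * lam)"

definition ffall :: "nat \<Rightarrow> real \<Rightarrow> real" where
  "ffall k x = (\<Prod>i<k. x - real i)"

definition S2lam :: "real \<Rightarrow> nat \<Rightarrow> nat \<Rightarrow> real" where
  "S2lam lam n = (THE c. (\<forall>k>n. c k = 0) \<and>
      (\<forall>x. dfall lam n x = (\<Sum>k\<le>n. c k * ffall k x)))"

text \<open>Degenerate exponential e_mu(t) = (1 + mu t)^(1/mu) as a formal power series.\<close>
definition e_fps :: "real \<Rightarrow> real fps" where
  "e_fps mu = fps_binomial (1 / mu) oo (fps_const mu * fps_X)"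

definition dbern :: "nat \<Rightarrow> real \<Rightarrow> real" where
  "dbern n mu = fact n * fps_nth (fps_X / (e_fps mu - 1)) n"

end

theory Submission
  imports Defs
begin

unbundle fps_syntax


lemma e_nth: "e_fps lam $ n = lam ^ n * ((1/lam) gchoose n)"
  by (simp add: e_fps_def)

lemma e_ode:
  assumes "lam \<noteq> 0"
  shows "fps_deriv (e_fps lam) + fps_const lam * (fps_X * fps_deriv (e_fps lam)) = e_fps lam"
proof (rule fps_ext)
  fix n
  have g: "of_nat (Suc n) * ((1/lam) gchoose Suc n) = (1/lam - of_nat n) * ((1/lam) gchoose n)"
    using gbinomial_absorption[of n "1/lam"] gbinomial_absorb_comp[of "1/lam" n] by (simp only:)
  have "(of_nat (Suc n) * lam ^ Suc n * ((1/lam) gchoose Suc n)) = lam ^ Suc n * (1/lam - of_nat n) * ((1/lam) gchoose n)"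
    by (metis g mult.assoc mult.commute)
  also have "\<dots> = lam ^ n * (1 - lam * n) * ((1/lam) gchoose n)"
  proof -
    have "lam * (1/lam - of_nat n) = 1 - lam * n" using assms by (simp add: right_diff_distrib)
    then show ?thesis by (metis (no_types, lifting) mult.assoc mult.commute power_Suc)
  qed
  finally have h: "(of_nat (Suc n) * lam ^ Suc n * ((1/lam) gchoose Suc n)) = lam ^ n * (1 - lam * n) * ((1/lam) gchoose n)" .
  show "(fps_deriv (e_fps lam) + fps_const lam * (fps_X * fps_deriv (e_fps lam))) $ n = e_fps lam $ n"
    using h by (cases n) (auto simp: e_nth algebra_simps)
qed


lemma u_ode:
  assumes "lam \<noteq> 0" "k \<ge> 1"
  shows "fps_deriv ((e_fps lam - 1)^k) + fps_const lam * (fps_X * fps_deriv ((e_fps lam - 1)^k))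
    = fps_const (of_nat k) * (e_fps lam - 1)^k + fps_const (of_nat k) * (e_fps lam - 1)^(k-1)"
proof -
  define E where "E = e_fps lam"
  have pk: "(E - 1)^k = (E - 1)^(k-1) * (E - 1)" using assms(2)
    by (metis Suc_diff_le diff_Suc_1 power_Suc2)
  have "fps_deriv ((E - 1)^k) + fps_const lam * (fps_X * fps_deriv ((E - 1)^k))
     = fps_const (of_nat k) * (E - 1)^(k-1) * (fps_deriv E + fps_const lam * (fps_X * fps_deriv E))"
    by (simp add: fps_deriv_power algebra_simps)
  also have "\<dots> = fps_const (of_nat k) * (E - 1)^(k-1) * E"
    using e_ode[OF assms(1)] by (simp add: E_def)
  also have "\<dots> = fps_const (of_nat k) * (E - 1)^k + fps_const (of_nat k) * (E - 1)^(k-1)"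
    by (simp add: pk algebra_simps)
  finally show ?thesis by (simp add: E_def)
qed

definition T :: "real \<Rightarrow> nat \<Rightarrow> nat \<Rightarrow> real" where
  "T lam n k = fact n / fact k * ((e_fps lam - 1)^k $ n)"

lemma T_zero_gt: "n < k \<Longrightarrow> T lam n k = 0"
proof -
  assume "n < k"
  have "(e_fps lam - 1) $ 0 = 0" by (simp add: e_nth)
  from startsby_zero_power_prefix[OF this] \<open>n < k\<close> show ?thesis by (simp add: T_def)
qed

lemma T_rec:
  assumes "lam \<noteq> 0"
  shows "T lam (Suc n) k = (if k = 0 then 0 else T lam n (k - 1)) + (real k - real n * lam) * T lam n k"
proof (cases "k = 0")
  case True
  then show ?thesis by (cases n) (simp_all add: T_def)
next
  case False
  define a where "a = (e_fps lam - 1)^k"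
  define b where "b = (e_fps lam - 1)^(k-1)"
  have c: "of_nat (Suc n) * a $ Suc n + lam * (of_nat n * a $ n) = of_nat k * a $ n + of_nat k * b $ n"
    using arg_cong[OF u_ode[OF assms, of k], of "\<lambda>f. f $ n"] False
    by (cases n) (simp_all add: a_def b_def)
  have fk: "fact k = real k * fact (k - 1)" using False
    by (metis fact_nonzero fact_num_eq_if of_nat_fact)
  have "T lam (Suc n) k = fact n / fact k * (of_nat (Suc n) * a $ Suc n)"
    by (simp add: T_def a_def)
  also have "\<dots> = fact n / fact k * (of_nat k * a $ n + of_nat k * b $ n - lam * (of_nat n * a $ n))"
  proof -
    have "of_nat (Suc n) * a $ Suc n = of_nat k * a $ n + of_nat k * b $ n - lam * (of_nat n * a $ n)"
      using c by linarith
    then show ?thesis by simp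
  qed
  also have "\<dots> = fact n / fact (k - 1) * b $ n + (real k - real n * lam) * (fact n / fact k * a $ n)"
    using False by (simp add: fk field_simps)
  finally show ?thesis using False by (simp add: T_def a_def b_def)
qed


lemma T_00: "T lam 0 0 = 1" by (simp add: T_def)

lemma ffall_Suc: "ffall (Suc k) x = ffall k x * (x - real k)"
  by (simp add: ffall_def)

lemma dfall_Suc: "dfall lam (Suc n) x = dfall lam n x * (x - real n * lam)"
  by (simp add: dfall_def)

lemma T_expand:
  assumes "lam \<noteq> 0"
  shows "dfall lam n x = (\<Sum>k\<le>n. T lam n k * ffall k x)"
proof (induction n)
  case 0
  then show ?case by (simp add: dfall_def ffall_def T_00)
next
  case (Suc n)
  have "(\<Sum>k\<le>Suc n. T lam (Suc n) k * ffall k x)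
      = (\<Sum>k\<le>Suc n. (if k = 0 then 0 else T lam n (k - 1)) * ffall k x)
        + (\<Sum>k\<le>Suc n. (real k - real n * lam) * T lam n k * ffall k x)"
    by (simp only: T_rec[OF assms] distrib_right sum.distrib)
  also have "(\<Sum>k\<le>Suc n. (if k = 0 then 0 else T lam n (k - 1)) * ffall k x)
      = (\<Sum>k\<le>n. T lam n k * ffall (Suc k) x)"
    by (subst sum.atMost_Suc_shift) simp
  also have "(\<Sum>k\<le>Suc n. (real k - real n * lam) * T lam n k * ffall k x)
      = (\<Sum>k\<le>n. (real k - real n * lam) * T lam n k * ffall k x)"
    by (simp add: T_zero_gt)
  also have "(\<Sum>k\<le>n. T lam n k * ffall (Suc k) x) + (\<Sum>k\<le>n. (real k - real n * lam) * T lam n k * ffall k x)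
      = (\<Sum>k\<le>n. T lam n k * ffall k x) * (x - real n * lam)"
    unfolding sum.distrib[symmetric] sum_distrib_right
    by (rule sum.cong) (simp_all add: ffall_Suc algebra_simps)
  finally show ?case by (simp add: dfall_Suc Suc.IH)
qed

lemma ffall_gt: "m < k \<Longrightarrow> ffall k (real m) = 0"
  unfolding ffall_def by (rule prod_zero) auto

lemma ffall_self: "ffall k (real k) \<noteq> 0"
  unfolding ffall_def by (auto simp: prod_zero_iff)

lemma coeff_unique:
  assumes "\<forall>k>n. d k = 0" "\<forall>x. (\<Sum>k\<le>n. d k * ffall k x) = (0::real)"
  shows "d k = 0"
proof (induction k rule: less_induct)
  case (less k)
  show ?case
  proof (cases "k \<le> n")
    case False then show ?thesis using assms(1) by auto
  next
    case True
    have "0 = (\<Sum>i\<le>n. d i * ffall i (real k))" using assms(2) by simp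
    also have "\<dots> = (\<Sum>i\<le>n. if i = k then d k * ffall k (real k) else 0)"
    proof (rule sum.cong)
      fix i assume "i \<in> {..n}"
      show "d i * ffall i (real k) = (if i = k then d k * ffall k (real k) else 0)"
        using less.IH[of i] ffall_gt[of k i] by (cases "i < k"; cases "i = k"; simp)
    qed simp
    also have "\<dots> = d k * ffall k (real k)" using True by simp
    finally show ?thesis using ffall_self[of k] by simp
  qed
qed

lemma S2lam_T:
  assumes "lam \<noteq> 0"
  shows "S2lam lam n = T lam n"
  unfolding S2lam_def
proof (rule the_equality)
  show "(\<forall>k>n. T lam n k = 0) \<and> (\<forall>x. dfall lam n x = (\<Sum>k\<le>n. T lam n k * ffall k x))"
    using T_zero_gt T_expand[OF assms] by auto
next
  fix c assume c: "(\<forall>k>n. c k = 0) \<and> (\<forall>x. dfall lam n x = (\<Sum>k\<le>n. c k * ffall k x))"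
  have "c k - T lam n k = 0" for k
  proof (rule coeff_unique[where n = n])
    show "\<forall>k>n. c k - T lam n k = 0" using c T_zero_gt by auto
    show "\<forall>x. (\<Sum>k\<le>n. (c k - T lam n k) * ffall k x) = 0"
      using c T_expand[OF assms] by (simp add: left_diff_distrib sum_subtractf)
  qed
  then show "c = T lam n" by auto
qed


lemma u0: "(e_fps lam - 1) $ 0 = 0" by (simp add: e_nth)

lemma u1: "lam \<noteq> 0 \<Longrightarrow> (e_fps lam - 1) $ 1 = 1" by (simp add: e_nth)

lemma Q_prop:
  assumes "lam \<noteq> 0"
  shows "fps_X / (e_fps lam - 1) * (e_fps lam - 1) = fps_X"
proof -
  define u where "u = e_fps lam - 1"
  define h where "h = fps_shift 1 u"
  have sd: "1 \<le> subdegree u"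
  proof (rule subdegree_geI)
    show "u \<noteq> 0" using u1[OF assms] by (auto simp: u_def)
    show "\<And>i. i < 1 \<Longrightarrow> u $ i = 0" using u0[of lam] by (simp add: u_def)
  qed
  have uh: "u = h * fps_X" using fps_shift_times_fps_X[OF sd] by (simp add: h_def)
  have h0: "h $ 0 \<noteq> 0" using u1[OF assms] by (simp add: h_def u_def)
  have "fps_X = u * inverse h"
    using inverse_mult_eq_1'[OF h0] by (simp add: uh algebra_simps)
  then have "u dvd fps_X" by (metis dvd_triv_left)
  then show ?thesis by (simp add: u_def[symmetric])
qed


lemma e_sq:
  assumes "lam \<noteq> 0"
  shows "e_fps (lam/2) oo (fps_const 2 * fps_X) = e_fps lam ^ 2"
proof -
  have "e_fps lam ^ 2 = (fps_binomial (1/lam) * fps_binomial (1/lam)) oo (fps_const lam * fps_X)"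
    by (simp add: e_fps_def power2_eq_square fps_compose_mult_distrib)
  also have "\<dots> = fps_binomial (1/(lam/2)) oo (fps_const lam * fps_X)"
    by (simp add: fps_binomial_add_mult[symmetric])
  finally have r: "e_fps lam ^ 2 = fps_binomial (1/(lam/2)) oo (fps_const lam * fps_X)" .
  show ?thesis
    unfolding r by (rule fps_ext) (simp add: e_fps_def power_mult_distrib[symmetric])
qed

lemma telescope:
  fixes u :: "real fps"
  defines "r \<equiv> fps_const (-1/2) * u"
  shows "(u + 2) * (\<Sum>k\<le>N. fps_const (1/2) * r^k) = 1 - r^(Suc N)"
proof (induction N)
  case 0
  have "(u + 2) * fps_const (1/2) = 1 - r"
    by (rule fps_ext) (simp add: r_def fps_numeral_nth algebra_simps)
  then show ?case by simp
next
  case (Suc N)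
  have e: "(u + 2) * fps_const (1/2) = 1 - r"
    by (rule fps_ext) (simp add: r_def fps_numeral_nth algebra_simps)
  have "(u + 2) * (\<Sum>k\<le>Suc N. fps_const (1/2) * r^k)
      = (u + 2) * (\<Sum>k\<le>N. fps_const (1/2) * r^k) + (u + 2) * fps_const (1/2) * r^Suc N"
    by (simp add: algebra_simps)
  also have "\<dots> = (1 - r^Suc N) + (1 - r) * r^Suc N" by (simp only: Suc.IH e)
  also have "\<dots> = 1 - r^Suc (Suc N)" by (simp add: algebra_simps)
  finally show ?case .
qed


theorem theorem13:
  fixes lam :: real and n :: nat
  assumes "lam \<noteq> 0"
  shows "(\<Sum>k\<le>n. (-1) ^ k / 2 ^ (k + 1) * fact k * S2lam lam n k)
         = 1 / real (n + 1) * (dbern (n + 1) lam - 2 ^ (n + 1) * dbern (n + 1) (lam / 2))"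
proof -
  define E where "E = e_fps lam"
  define u where "u = E - 1"
  define r where "r = fps_const (-1/2) * u"
  define P where "P = (\<lambda>N. \<Sum>k\<le>N. fps_const (1/2) * r^k)"
  define G where "G = Abs_fps (\<lambda>j. \<Sum>k\<le>j. 1/2 * r^k $ j)"
  have r0: "r $ 0 = 0" using u0[of lam] by (simp add: r_def u_def E_def)
  have rk: "j < k \<Longrightarrow> r^k $ j = 0" for j k using startsby_zero_power_prefix[OF r0] by blast
  have PG: "P N $ j = G $ j" if "j \<le> N" for N j
  proof -
    have "P N $ j = (\<Sum>k\<le>N. 1/2 * r^k $ j)" by (simp add: P_def fps_sum_nth)
    also have "\<dots> = (\<Sum>k\<le>j. 1/2 * r^k $ j)"
      by (rule sum.mono_neutral_right) (use that rk in auto)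
    finally show ?thesis by (simp add: G_def)
  qed
  have uG: "(u + 2) * G = 1"
  proof (rule fps_ext)
    fix m
    have "((u + 2) * G) $ m = (\<Sum>i=0..m. (u + 2) $ i * G $ (m - i))" by (simp add: fps_mult_nth)
    also have "\<dots> = (\<Sum>i=0..m. (u + 2) $ i * P m $ (m - i))" by (simp add: PG)
    also have "\<dots> = ((u + 2) * P m) $ m" by (simp add: fps_mult_nth)
    also have "\<dots> = (1 - r^Suc m) $ m" unfolding P_def r_def by (simp only: telescope)
    also have "\<dots> = (1::real fps) $ m" using rk[of m "Suc m"] by simp
    finally show "((u + 2) * G) $ m = (1::real fps) $ m" .
  qed
  have lhs: "(\<Sum>k\<le>n. (-1) ^ k / 2 ^ (k + 1) * fact k * S2lam lam n k) = fact n * G $ n"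
  proof -
    have "(\<Sum>k\<le>n. (-1) ^ k / 2 ^ (k + 1) * fact k * S2lam lam n k)
        = (\<Sum>k\<le>n. fact n * (1/2 * r^k $ n))"
    proof (rule sum.cong)
      fix k assume "k \<in> {..n}"
      have "r^k $ n = (-1/2)^k * u^k $ n"
        by (simp add: r_def power_mult_distrib fps_const_power)
      then show "(-1) ^ k / 2 ^ (k + 1) * fact k * S2lam lam n k = fact n * (1/2 * r^k $ n)" (is ?g)
      proof -
        have h2: "(- (1/2::real))^k = (-1)^k / 2^k" by (metis minus_divide_left power_divide)
        show ?g using \<open>r^k $ n = (-1/2)^k * u^k $ n\<close>
          by (simp add: S2lam_T[OF assms] T_def u_def E_def h2)
      qed
    qed simp
    also have "\<dots> = fact n * G $ n" by (simp add: G_def sum_distrib_left)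
    finally show ?thesis .
  qed
  define Q1 where "Q1 = fps_X / (e_fps lam - 1)"
  define Q2 where "Q2 = fps_X / (e_fps (lam/2) - 1)"
  define W where "W = Q2 oo (fps_const 2 * fps_X)"
  have c0: "(fps_const (2::real) * fps_X) $ 0 = 0" by simp
  have Q1u: "Q1 * u = fps_X" using Q_prop[OF assms] by (simp add: Q1_def u_def E_def)
  have Q2p: "Q2 * (e_fps (lam/2) - 1) = fps_X" using Q_prop[of "lam/2"] assms by (simp add: Q2_def)
  have W2: "W * (E^2 - 1) = fps_const 2 * fps_X"
  proof -
    have "(Q2 * (e_fps (lam/2) - 1)) oo (fps_const 2 * fps_X) = W * (E^2 - 1)"
      by (simp add: fps_compose_mult_distrib[OF c0] fps_compose_sub_distrib e_sq[OF assms] W_def E_def)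
    then show ?thesis using Q2p c0 by (simp add: fps_X_fps_compose_startby0)
  qed
  have Esq: "E^2 - 1 = u * (u + 2)" by (simp add: u_def power2_eq_square algebra_simps)
  have "(Q1 - W - fps_X * G) * (u * (u + 2)) = 0"
  proof -
    have "(Q1 - W - fps_X * G) * (u * (u + 2)) = (Q1 * u) * (u + 2) - W * (E^2 - 1) - fps_X * u * ((u + 2) * G)"
      unfolding Esq by (simp add: algebra_simps)
    also have "\<dots> = fps_X * (u + 2) - fps_const 2 * fps_X - fps_X * u" by (simp only: Q1u W2 uG mult_1_right)
    also have "\<dots> = 0" by (simp add: algebra_simps numeral_fps_const)
    finally show ?thesis .
  qed
  moreover have "u \<noteq> 0" using u1[OF assms] by (auto simp: u_def E_def)
  moreover have "u + 2 \<noteq> 0"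
  proof
    assume "u + 2 = 0"
    then have "(u + 2) $ 0 = 0" by simp
    then show False using u0[of lam] by (simp add: u_def E_def)
  qed
  ultimately have QW: "Q1 - W = fps_X * G" by simp
  have "(Q1 - W) $ Suc n = G $ n" by (simp add: QW)
  moreover have "W $ Suc n = 2 ^ Suc n * Q2 $ Suc n" unfolding W_def by (rule fps_nth_compose_linear)
  ultimately have key: "Q1 $ Suc n - 2 ^ Suc n * Q2 $ Suc n = G $ n" by (metis fps_sub_nth)
  have "1 / real (n + 1) * (dbern (n + 1) lam - 2 ^ (n + 1) * dbern (n + 1) (lam / 2))
      = 1 / real (n + 1) * fact (Suc n) * (Q1 $ Suc n - 2 ^ Suc n * Q2 $ Suc n)"
    by (simp add: dbern_def Q1_def Q2_def algebra_simps)
  also have "\<dots> = fact n * G $ n" unfolding key by (simp add: fact_Suc field_simps)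
  finally show ?thesis using lhs by simp
qed

end
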